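(* Let $F(z,u,x)$ be a formal power series and suppose that there are functions $c(x)$ and $\rho(x)$, analytic at $x=0$, with $c(0)\neq0$, $\rho(0)>0$ and $\rho'(0)\neq 0$, such that \[ [z^n]F(z,0,x)=c(x)\,n^{-5/2}\rho(x)^n\Big(1+O\big(\tfrac1n\big)\Big) \] uniformly for $x$ in a compact neighborhood of $x=0$. Then, for $k=k(n)=\Theta(\sqrt n)$, as $n\to\infty$, \[ k!\,[z^nx^k]F(z,0,x)\sim c(0)\,n^{k-5/2}\rho(0)^n\Big(\frac{\rho'(0)}{\rho(0)}\Big)^k\exp\!\Big(\frac{k^2}{2n}\Big(\frac{\rho''(0)\rho(0)}{\rho'(0)^2}-1\Big)\Big). \] *)

theory Defs
  imports "HOL-Complex_Analysis.Complex_Analysis" "HOL-Library.Landau_Symbols"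
begin

text \<open>The series F(z,0,x) is represented by its coefficient array a n k = [z^n x^k] F(z,0,x).
  The generating function in x of the n-th z-coefficient: [z^n] F(z,0,x).\<close>
definition zcoeff_fun :: "(nat \<Rightarrow> nat \<Rightarrow> complex) \<Rightarrow> nat \<Rightarrow> complex \<Rightarrow> complex" where
  "zcoeff_fun a n x = (\<Sum>j. a n j * x ^ j)"

end

theory Submission
  imports Defs
begin

lemma tail_bound:
  fixes c :: "nat \<Rightarrow> complex"
  assumes sums: "(\<lambda>j. c j * x^j) sums S" and cb: "\<And>j. norm (c j) \<le> B / R^j"
    and R: "R > 0" and x: "norm x \<le> R/2"
  shows "norm (S - (\<Sum>j<m. c j * x^j)) \<le> 2 * B * (norm x / R)^m"
proof -
  define q where "q = norm x / R"
  have q0: "0 \<le> q" and q1: "q \<le> 1/2" using R x by (auto simp: q_def field_simps)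
  have B0: "0 \<le> B" using cb[of 0] by (metis norm_ge_zero order_trans power_0 div_by_1)
  have sh: "(\<lambda>j. c (j+m) * x^(j+m)) sums (S - (\<Sum>j<m. c j * x^j))"
    using sums by (subst sums_iff_shift') 
  have g: "(\<lambda>j. B * q^m * q^j) sums (B * q^m * (1 / (1 - q)))"
    using q0 q1 by (intro sums_mult geometric_sums) auto
  have le: "norm (c (j+m) * x^(j+m)) \<le> B * q^m * q^j" for j
  proof -
    have "norm (c (j+m) * x^(j+m)) = norm (c (j+m)) * norm x ^ (j+m)"
      by (simp add: norm_mult norm_power)
    also have "\<dots> \<le> B / R^(j+m) * norm x ^ (j+m)"
      by (intro mult_right_mono cb) auto
    also have "\<dots> = B * q^(j+m)" using R by (simp add: q_def power_divide)
    finally show ?thesis by (simp add: power_add mult_ac)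
  qed
  have sn: "summable (\<lambda>j. norm (c (j+m) * x^(j+m)))"
    by (rule summable_comparison_test'[OF sums_summable[OF g]]) (use le in auto)
  have "norm (S - (\<Sum>j<m. c j * x^j)) = norm (\<Sum>j. c (j+m) * x^(j+m))"
    using sh by (simp add: sums_iff)
  also have "\<dots> \<le> (\<Sum>j. norm (c (j+m) * x^(j+m)))" by (rule summable_norm[OF sn])
  also have "\<dots> \<le> (\<Sum>j. B * q^m * q^j)"
    by (intro suminf_le le sn sums_summable[OF g])
  also have "\<dots> = B * q^m * (1 / (1 - q))" using g by (simp add: sums_iff)
  also have "\<dots> \<le> B * q^m * 2"
    using q0 q1 B0 by (intro mult_left_mono) (auto simp: field_simps)
  finally show ?thesis by (simp add: q_def mult_ac)
qed

lemma taylor2_bound: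
  fixes f :: "complex \<Rightarrow> complex"
  assumes holf: "f holomorphic_on ball 0 R" and R: "R > 0"
  shows "\<exists>C \<delta>. \<delta> > 0 \<and> (\<forall>x. norm x < \<delta> \<longrightarrow>
           norm (f x - f 0 - deriv f 0 * x - deriv (deriv f) 0 / 2 * x^2) \<le> C * norm x ^ 3)"
proof -
  define R' where "R' = R/2"
  have R': "R' > 0" "R' < R" using R by (auto simp: R'_def)
  have sub: "cball 0 R' \<subseteq> ball 0 R" using R' by auto
  have contf: "continuous_on (cball 0 R') f"
    using holomorphic_on_imp_continuous_on[OF holomorphic_on_subset[OF holf sub]] .
  have "compact (f ` cball 0 R')" by (intro compact_continuous_image contf) auto
  then obtain B where B: "\<And>y. y \<in> f ` cball 0 R' \<Longrightarrow> norm y \<le> B"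
    using compact_imp_bounded bounded_iff by metis
  have cb: "norm ((deriv ^^ j) f 0 / fact j) \<le> B / R'^j" for j
  proof -
    have "norm ((deriv ^^ j) f 0) \<le> fact j * B / R'^j"
      by (rule Cauchy_inequality[OF holomorphic_on_subset[OF holf] contf R'(1)])
         (use R' B in \<open>auto simp: dist_norm\<close>)
    thus ?thesis by (simp add: norm_divide field_simps)
  qed
  show ?thesis
  proof (intro exI conjI allI impI)
    show "R'/2 > 0" using R' by simp
    fix x :: complex assume x: "norm x < R'/2"
    have xb: "x \<in> ball 0 R" using x R' by auto
    have s: "(\<lambda>j. (deriv ^^ j) f 0 / fact j * x^j) sums f x"
      using holomorphic_power_series[OF holf xb] by simp
    have "norm (f x - (\<Sum>j<3. (deriv ^^ j) f 0 / fact j * x^j)) \<le> 2 * B * (norm x / R')^3"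
      by (rule tail_bound[OF s cb R'(1)]) (use x in auto)
    also have "(\<Sum>j<3. (deriv ^^ j) f 0 / fact j * x^j) = f 0 + deriv f 0 * x + deriv (deriv f) 0 / 2 * x^2"
      by (simp add: eval_nat_numeral)
    finally show "norm (f x - f 0 - deriv f 0 * x - deriv (deriv f) 0 / 2 * x^2) \<le> (2 * B / R'^3) * norm x ^ 3"
      by (simp add: power_divide algebra_simps diff_diff_eq)
  qed
qed

lemma Ln_bound3:
  fixes w :: complex
  assumes "norm w \<le> 1/2"
  shows "norm (Ln (1 + w) - (w - w^2/2)) \<le> 2 * norm w ^ 3"
proof -
  have s0: "(\<lambda>n. - ((-w)^n) / of_nat n) sums Ln (1 + w)"
    using assms by (intro Ln_series') auto
  have eq: "(\<lambda>n. - ((-w)^n) / of_nat n) = (\<lambda>n. (- ((-1)^n) / of_nat n) * w^n)"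
    by (rule ext) (subst power_minus, simp)
  have s: "(\<lambda>n. (- ((-1)^n) / of_nat n) * w^n) sums Ln (1 + w)" using s0 eq by simp
  have cb: "norm (- ((-1::complex)^j) / of_nat j) \<le> 1 / 1^j" for j
  proof (cases j)
    case (Suc m)
    have "norm (- ((-1::complex)^j) / of_nat j) = 1 / real j" by (simp add: norm_divide norm_power)
    also have "\<dots> \<le> 1" using Suc by simp
    finally show ?thesis by simp
  qed simp
  have "norm (Ln (1+w) - (\<Sum>j<3. (- ((-1)^j) / of_nat j) * w^j)) \<le> 2 * 1 * (norm w / 1)^3"
    by (rule tail_bound[OF s cb]) (use assms in auto)
  also have "(\<Sum>j<3. (- ((-1)^j) / of_nat j) * w^j) = w - w^2/2"
    by (simp add: eval_nat_numeral)
  finally show ?thesis by simp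
qed

lemma higher_deriv_exp_linear:
  "(deriv ^^ m) (\<lambda>x. exp (u * x)) = (\<lambda>x::complex. u^m * exp (u*x))"
proof (induction m)
  case 0 thus ?case by simp
next
  case (Suc m)
  have "(deriv ^^ Suc m) (\<lambda>x. exp (u * x)) = deriv (\<lambda>x. u^m * exp (u*x))"
    using Suc by simp
  also have "\<dots> = (\<lambda>x. u^Suc m * exp (u*x))"
  proof
    fix x :: complex
    have "((\<lambda>x. u^m * exp (u*x)) has_field_derivative u^m * (exp (u*x) * u)) (at x)"
      by (auto intro!: derivative_eq_intros)
    thus "deriv (\<lambda>x. u^m * exp (u*x)) x = u^Suc m * exp (u*x)"
      by (subst DERIV_imp_deriv) (auto simp: algebra_simps)
  qed
  finally show ?case .
qed

lemma choose_prod: "real (k choose j) * fact j = (\<Prod>i<j. real k - real i)"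
proof -
  have "real (k choose j) = (real k gchoose j)" by (simp add: binomial_gbinomial)
  also have "\<dots> = (\<Prod>i=0..<j. real k - of_nat i) / fact j" by (rule gbinomial_prod_rev)
  finally show ?thesis by (simp add: atLeast0LessThan)
qed

lemma ffact_bound:
  assumes k: "k \<ge> (1::nat)"
  shows "0 \<le> (\<Prod>i<j. real k - real i) \<and> (\<Prod>i<j. real k - real i) \<le> real k ^ j \<and>
         real k ^ j - (\<Prod>i<j. real k - real i) \<le> real j ^ 2 * real k ^ j / real k"
proof (induction j)
  case 0 thus ?case by simp
next
  case (Suc j)
  define Q where "Q = (\<Prod>i<j. real k - real i)"
  have IH: "0 \<le> Q" "Q \<le> real k ^ j" "real k ^ j - Q \<le> real j ^ 2 * real k ^ j / real k"
    using Suc by (auto simp: Q_def)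
  have kp: "real k > 0" using k by simp
  have eqS: "(\<Prod>i<Suc j. real k - real i) = Q * (real k - real j)" by (simp add: Q_def)
  show ?case
  proof (cases "j < k")
    case True
    have d0: "0 \<le> real k - real j" "real k - real j \<le> real k" using True by auto
    have A: "0 \<le> Q * (real k - real j)" using IH d0 by simp
    have B0: "Q * (real k - real j) \<le> real k ^ j * real k" using IH d0 kp
      by (intro mult_mono) auto
    have B: "Q * (real k - real j) \<le> real k ^ Suc j" using B0 by (simp add: mult.commute)
    have "real k ^ Suc j - Q * (real k - real j) = real k * (real k ^ j - Q) + real j * Q"
      by (simp add: algebra_simps)
    also have "\<dots> \<le> real k * (real j ^ 2 * real k ^ j / real k) + real j * real k ^ j"
      using IH kp by (intro add_mono mult_left_mono) auto
    also have "\<dots> = (real j ^ 2 + real j) * real k ^ j" using kp by (simp add: field_simps)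
    also have "\<dots> \<le> real (Suc j) ^ 2 * real k ^ j"
      by (intro mult_right_mono) (auto simp: power2_eq_square algebra_simps)
    also have "\<dots> = real (Suc j) ^ 2 * real k ^ Suc j / real k" using kp by simp
    finally have C: "real k ^ Suc j - Q * (real k - real j) \<le> real (Suc j) ^ 2 * real k ^ Suc j / real k" .
    show ?thesis unfolding eqS by (intro conjI A B C)
  next
    case False
    have z: "(\<Prod>i<Suc j. real k - real i) = 0"
      using False by (intro prod_zero) (auto intro!: bexI[of _ k])
    have "k \<le> Suc j * Suc j" using False le_square[of "Suc j"] by linarith
    hence kj: "real k \<le> real (Suc j) ^ 2" unfolding power2_eq_square by (metis of_nat_le_iff of_nat_mult)
    have "real k ^ Suc j = 1 * real k ^ Suc j" by simp
    also have "\<dots> \<le> (real (Suc j) ^ 2 / real k) * real k ^ Suc j"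
      using kj kp by (intro mult_right_mono) (auto simp: field_simps)
    also have "\<dots> = real (Suc j) ^ 2 * real k ^ Suc j / real k" by simp
    finally have F: "real k ^ Suc j \<le> real (Suc j) ^ 2 * real k ^ Suc j / real k" .
    have P: "0 \<le> real k ^ Suc j" by simp
    show ?thesis unfolding z using F P by simp
  qed
qed

lemma fact_exp_bound:
  assumes "k \<ge> (1::nat)"
  shows "fact k * exp (real k) / real k ^ k \<le> exp 1 * real k"
  using assms
proof (induction k rule: dec_induct)
  case base thus ?case by simp
next
  case (step k)
  have kp: "real k > 0" using step by simp
  define y where "y = 1 / (real k + 1)"
  have y: "0 < y" "y < 1" using kp by (auto simp: y_def field_simps)
  have "(real k / (real k + 1)) ^ Suc k = (1 - y) ^ Suc k"
    using kp by (simp add: y_def field_simps)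
  also have "\<dots> \<le> exp (-y) ^ Suc k"
    using y by (intro power_mono) (auto simp: exp_ge_add_one_self[of "-y", simplified] intro: order_trans[OF _ exp_ge_add_one_self])
  also have "\<dots> = exp (- 1)"
  proof -
    have "real (Suc k) * (-y) = -1" using kp by (simp add: y_def field_simps)
    thus ?thesis by (metis exp_of_nat_mult)
  qed
  finally have key: "(real k / (real k + 1)) ^ Suc k \<le> exp (-1)" .
  have nz: "real k \<noteq> 0" "real k + 1 \<noteq> 0" using kp by auto
  have e0: "(real k / (real k + 1)) * ((real k + 1) / real k) = 1"
    using kp by (simp add: divide_simps)
  have e1: "(real k / (real k + 1)) ^ Suc k * ((real k + 1) / real k) = real k ^ k / (1 + real k)^k"
    by (simp only: power_Suc2 mult.assoc e0 mult_1_right power_divide) (simp add: add_ac)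
  have e2a: "fact (Suc k) * exp (real (Suc k)) / real (Suc k) ^ Suc k = ((1 + real k) * (fact k * exp (real k) * exp 1)) / ((1 + real k) * (1 + real k)^k)"
    by (simp only: fact_Suc power_Suc of_nat_Suc exp_add) (simp add: mult_ac)
  have e2b: "((1 + real k) * (fact k * exp (real k) * exp 1)) / ((1 + real k) * (1 + real k)^k) = fact k * exp (real k) * exp 1 / (1 + real k)^k"
    by (rule mult_divide_mult_cancel_left) (use kp in linarith)
  note e2 = trans[OF e2a e2b]
  have "fact (Suc k) * exp (real (Suc k)) / real (Suc k) ^ Suc k
     = (fact k * exp (real k) / real k ^ k) * (exp 1 * ((real k / (real k + 1)) ^ Suc k * ((real k + 1) / real k)))"
    unfolding e1 e2 using kp by (simp add: field_simps)
  also have "\<dots> \<le> (exp 1 * real k) * (exp 1 * (exp (-1) * ((real k + 1) / real k)))"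
    using step.IH key kp by (intro mult_mono mult_left_mono mult_right_mono) auto
  also have "\<dots> = exp 1 * real (Suc k)" using kp by (simp add: field_simps exp_minus)
  finally show ?case .
qed

lemma summable_sq_half: "summable (\<lambda>j. real j ^ 2 / 2^j)"
proof (rule summable_ratio_test[where c="8/9" and N=3])
  fix n :: nat assume n: "n \<ge> 3"
  have "9 * (real n + 1)^2 \<le> 16 * real n ^ 2"
  proof -
    have "real n \<ge> 3" using n by simp
    hence "7 * real n * real n \<ge> 21 * real n" by (intro mult_right_mono) auto
    moreover have "3 * real n \<ge> 9" using \<open>real n \<ge> 3\<close> by simp
    moreover have "9 * (real n + 1)^2 = 9*(real n*real n) + 18*real n + 9" by (simp add: power2_eq_square algebra_simps)
    moreover have "16 * real n^2 = 16 * (real n * real n)" by (simp add: power2_eq_square)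
    ultimately show ?thesis by linarith
  qed
  thus "norm (real (Suc n) ^ 2 / 2 ^ Suc n) \<le> 8/9 * norm (real n ^ 2 / 2^n)"
    by (simp add: field_simps)
qed simp

lemma coeff_compare:
  fixes g :: "nat \<Rightarrow> complex" and u s Gs :: complex and k :: nat and M r :: real
  assumes k: "k \<ge> 1" and r: "r > 0" and s: "norm s = r" and us: "u * s = of_nat k"
    and gb: "\<And>j. norm (g j) \<le> fact j * M / (2*r)^j"
    and gs: "(\<lambda>j. g j / fact j * s^j) sums Gs"
  shows "norm ((\<Sum>i=0..k. of_nat (k choose i) * g i * u^(k-i)) / u^k - Gs)
           \<le> M / real k * (\<Sum>j. real j ^ 2 / 2^j)"
proof -
  have u0: "u \<noteq> 0" using us k by auto
  have M0: "M \<ge> 0" using gb[of 0] by (metis norm_ge_zero order_trans fact_0 power_0 div_by_1 mult_1)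
  have kp: "real k > 0" using k by simp
  have nu: "norm u * r = real k"
    using arg_cong[OF us, of norm] s by (simp add: norm_mult)
  define t where "t i = of_nat (k choose i) * g i / u^i" for i
  have sum_eq: "(\<Sum>i=0..k. of_nat (k choose i) * g i * u^(k-i)) / u^k = (\<Sum>i=0..k. t i)"
    unfolding t_def sum_divide_distrib
    by (intro sum.cong refl) (simp add: power_diff u0 field_simps)
  have ts: "t sums (\<Sum>i=0..k. t i)"
    by (rule sums_finite) (auto simp: t_def binomial_eq_0)
  have ds: "(\<lambda>i. t i - g i / fact i * s^i) sums ((\<Sum>i=0..k. t i) - Gs)"
    using sums_diff[OF ts gs] .
  have db: "norm (t i - g i / fact i * s^i) \<le> M / real k * (real i ^ 2 / 2^i)" for i
  proof -
    define P where "P = (\<Prod>j<i. real k - real j)"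
    have PP: "0 \<le> P" "P \<le> real k ^ i" "real k ^ i - P \<le> real i ^ 2 * real k ^ i / real k"
      using ffact_bound[OF k, of i] by (auto simp: P_def)
    have cP: "of_nat (k choose i) * fact i = (of_real P :: complex)"
      using arg_cong[OF choose_prod[of k i], of complex_of_real] by (simp add: P_def)
    have f0: "(fact i :: complex) \<noteq> 0" by simp
    have s_eq: "s = of_nat k / u" using us u0 by (simp add: field_simps)
    have "t i - g i / fact i * s^i = g i / (fact i * u^i) * (of_nat (k choose i) * fact i - of_nat k ^ i)"
      using f0 u0 by (simp add: t_def s_eq power_divide field_simps)
    also have "\<dots> = g i / (fact i * u^i) * of_real (P - real k ^ i)"
      by (simp add: cP)
    finally have eq: "t i - g i / fact i * s^i = g i / (fact i * u^i) * of_real (P - real k ^ i)" .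
    have "norm (t i - g i / fact i * s^i) = norm (g i) / (fact i * norm u ^ i) * (real k ^ i - P)"
    proof -
      have nP: "norm (complex_of_real (P - real k ^ i)) = real k ^ i - P"
        using PP by (simp only: norm_of_real)
      show ?thesis unfolding eq norm_mult norm_divide nP by (simp add: norm_power)
    qed
    also have "\<dots> \<le> (fact i * M / (2*r)^i) / (fact i * norm u ^ i) * (real i ^ 2 * real k ^ i / real k)"
      using PP gb[of i] u0 M0 r by (intro mult_mono divide_right_mono) auto
    also have "\<dots> = M * real i ^ 2 * real k ^ i / (real k * (2 * (norm u * r))^i)"
      using u0 r by (simp add: field_simps power_mult_distrib)
    also have "\<dots> = M / real k * (real i ^ 2 / 2^i)"
      unfolding nu using kp by (simp add: field_simps power_mult_distrib)
    finally show ?thesis .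
  qed
  have sb: "summable (\<lambda>i. M / real k * (real i ^ 2 / 2^i))"
    by (intro summable_mult summable_sq_half)
  have sn: "summable (\<lambda>i. norm (t i - g i / fact i * s^i))"
    by (rule summable_comparison_test'[OF sb]) (use db in auto)
  have "norm ((\<Sum>i=0..k. t i) - Gs) = norm (\<Sum>i. t i - g i / fact i * s^i)"
    using ds by (simp add: sums_iff)
  also have "\<dots> \<le> (\<Sum>i. norm (t i - g i / fact i * s^i))" by (rule summable_norm[OF sn])
  also have "\<dots> \<le> (\<Sum>i. M / real k * (real i ^ 2 / 2^i))"
    by (intro suminf_le db sn sb)
  also have "\<dots> = M / real k * (\<Sum>j. real j ^ 2 / 2^j)"
    by (intro suminf_mult summable_sq_half)
  finally show ?thesis unfolding sum_eq .
qed

lemma log_expansion: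
  fixes \<rho> :: "complex \<Rightarrow> complex"
  assumes holo: "\<rho> holomorphic_on ball 0 R" and R: "R > 0" and r0: "\<rho> 0 \<noteq> 0"
  shows "\<exists>C \<delta>. \<delta> > 0 \<and> (\<forall>x. norm x < \<delta> \<longrightarrow> norm (\<rho> x / \<rho> 0 - 1) \<le> 1/2 \<and>
     norm (Ln (\<rho> x / \<rho> 0) - (deriv \<rho> 0 / \<rho> 0) * x
        - (deriv (deriv \<rho>) 0 / (2 * \<rho> 0) - (deriv \<rho> 0 / \<rho> 0)^2/2) * x^2) \<le> C * norm x ^ 3)"
proof -
  define a where "a = deriv \<rho> 0 / \<rho> 0"
  define p where "p = deriv (deriv \<rho>) 0 / (2 * \<rho> 0)"
  obtain C2 \<delta>2 where \<delta>2: "\<delta>2 > 0" and C2: "\<And>x. norm x < \<delta>2 \<Longrightarrow>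
      norm (\<rho> x - \<rho> 0 - deriv \<rho> 0 * x - deriv (deriv \<rho>) 0 / 2 * x^2) \<le> C2 * norm x ^ 3"
    using taylor2_bound[OF holo R] by blast
  define C2' where "C2' = C2 / norm (\<rho> 0)"
  have e1b: "norm (\<rho> x / \<rho> 0 - 1 - a * x - p * x^2) \<le> C2' * norm x ^ 3" if "norm x < \<delta>2" for x
  proof -
    have "\<rho> x / \<rho> 0 - 1 - a * x - p * x^2 = (\<rho> x - \<rho> 0 - deriv \<rho> 0 * x - deriv (deriv \<rho>) 0 / 2 * x^2) / \<rho> 0"
      using r0 by (simp add: a_def p_def field_simps)
    hence "norm (\<rho> x / \<rho> 0 - 1 - a * x - p * x^2) = norm (\<rho> x - \<rho> 0 - deriv \<rho> 0 * x - deriv (deriv \<rho>) 0 / 2 * x^2) / norm (\<rho> 0)"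
      by (simp add: norm_divide)
    also have "\<dots> \<le> C2 * norm x ^ 3 / norm (\<rho> 0)"
      using C2[OF that] r0 by (intro divide_right_mono) auto
    finally show ?thesis by (simp add: C2'_def)
  qed
  define A where "A = norm a + norm p + \<bar>C2'\<bar> + 1"
  have A1: "A \<ge> 1" by (simp add: A_def)
  have Aa: "norm a + 1/2 \<le> A" "norm p + \<bar>C2'\<bar> \<le> A" by (auto simp: A_def)
  define C where "C = \<bar>C2'\<bar> + 2 * A^3 + A^2"
  define \<delta> where "\<delta> = min \<delta>2 (1 / (2*A))"
  show ?thesis
  proof (intro exI conjI allI impI)
    show "\<delta> > 0" using \<delta>2 A1 by (simp add: \<delta>_def)
    fix x :: complex assume x: "norm x < \<delta>"
    define nx where "nx = norm x"
    have nx0: "nx \<ge> 0" by (simp add: nx_def)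
    have xd2: "norm x < \<delta>2" using x by (simp add: \<delta>_def)
    have xA: "A * nx \<le> 1/2"
    proof -
      have "nx \<le> 1 / (2*A)" using x by (simp add: \<delta>_def nx_def)
      hence "A * nx \<le> A * (1 / (2*A))" using A1 by (intro mult_left_mono) auto
      thus ?thesis using A1 by simp
    qed
    have x1: "nx \<le> 1"
    proof -
      have "1 * nx \<le> A * nx" using A1 nx0 by (intro mult_right_mono) auto
      thus ?thesis using xA by simp
    qed
    have p32: "nx ^ 3 \<le> nx ^ 2" by (rule power_decreasing) (use nx0 x1 in auto)
    define w where "w = \<rho> x / \<rho> 0 - 1"
    define e1 where "e1 = w - a*x - p*x^2"
    have e1: "norm e1 \<le> \<bar>C2'\<bar> * nx ^ 3"
    proof -
      have "norm e1 \<le> C2' * nx ^ 3" using e1b[OF xd2] by (simp add: e1_def w_def nx_def)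
      also have "\<dots> \<le> \<bar>C2'\<bar> * nx ^ 3" using nx0 by (intro mult_right_mono) auto
      finally show ?thesis .
    qed
    have wa: "norm (w - a*x) \<le> A * nx ^ 2"
    proof -
      have "w - a*x = p * x^2 + e1" by (simp add: e1_def)
      hence "norm (w - a*x) \<le> norm p * nx^2 + \<bar>C2'\<bar> * nx ^ 3"
        using e1 norm_triangle_ineq[of "p * x^2" e1] by (simp add: norm_mult norm_power nx_def)
      also have "\<dots> \<le> norm p * nx^2 + \<bar>C2'\<bar> * nx ^ 2"
        using p32 by (intro add_left_mono mult_left_mono) auto
      also have "\<dots> = (norm p + \<bar>C2'\<bar>) * nx^2" by (simp add: algebra_simps)
      also have "\<dots> \<le> A * nx^2" using Aa by (intro mult_right_mono) auto
      finally show ?thesis .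
    qed
    have w: "norm w \<le> A * nx"
    proof -
      have "norm w \<le> norm (a*x) + norm (w - a*x)" by (rule norm_triangle_sub)
      also have "\<dots> \<le> norm a * nx + A * nx ^ 2" using wa by (simp add: norm_mult nx_def)
      also have "A * nx ^ 2 \<le> (1/2) * nx"
      proof -
        have "A * nx ^ 2 = (A * nx) * nx" by (simp add: power2_eq_square)
        also have "\<dots> \<le> (1/2) * nx" using xA nx0 by (intro mult_right_mono) auto
        finally show ?thesis .
      qed
      hence "norm a * nx + A * nx ^ 2 \<le> norm a * nx + (1/2) * nx" by simp
      also have "norm a * nx + (1/2) * nx = (norm a + 1/2) * nx" by (simp add: algebra_simps)
      also have "\<dots> \<le> A * nx" using Aa nx0 by (intro mult_right_mono) auto
      finally show ?thesis .
    qed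
    have wh: "norm w \<le> 1/2" using w xA by linarith
    have wpa: "norm (w + a*x) \<le> 2 * A * nx"
    proof -
      have "norm (w + a*x) \<le> norm w + norm a * nx" using norm_triangle_ineq[of w "a*x"] by (simp add: norm_mult nx_def)
      also have "norm a * nx \<le> A * nx" using Aa nx0 by (intro mult_right_mono) auto
      finally show ?thesis using w by simp
    qed
    define e2 where "e2 = Ln (1 + w) - (w - w^2/2)"
    have e2: "norm e2 \<le> 2 * A^3 * nx^3"
    proof -
      have "norm e2 \<le> 2 * norm w ^ 3" unfolding e2_def by (rule Ln_bound3[OF wh])
      also have "\<dots> \<le> 2 * (A * nx) ^ 3" using w by (intro mult_left_mono power_mono) auto
      finally show ?thesis by (simp add: power_mult_distrib)
    qed
    have w1: "\<rho> x / \<rho> 0 = 1 + w" by (simp add: w_def)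
    have ident: "Ln (\<rho> x / \<rho> 0) - a * x - (p - a^2/2) * x^2 = e1 + e2 - (w - a*x) * (w + a*x) / 2"
      unfolding w1 e1_def e2_def by (simp add: field_simps power2_eq_square)
    have "norm (Ln (\<rho> x / \<rho> 0) - a * x - (p - a^2/2) * x^2) \<le> norm e1 + norm e2 + norm ((w - a*x) * (w + a*x) / 2)"
      unfolding ident by (rule order_trans[OF norm_triangle_ineq4 add_right_mono[OF norm_triangle_ineq]])
    also have "norm ((w - a*x) * (w + a*x) / 2) = norm (w - a*x) * norm (w + a*x) / 2"
      by (simp add: norm_mult norm_divide)
    also have "\<dots> \<le> (A * nx^2) * (2 * A * nx) / 2"
      using wa wpa A1 nx0 by (intro divide_right_mono mult_mono) auto
    also have "(A * nx^2) * (2 * A * nx) / 2 = A^2 * nx^3" by (simp add: power2_eq_square power3_eq_cube)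
    finally have "norm (Ln (\<rho> x / \<rho> 0) - a * x - (p - a^2/2) * x^2) \<le> \<bar>C2'\<bar> * nx ^ 3 + 2 * A^3 * nx^3 + A^2 * nx^3"
      using e1 e2 by linarith
    also have "\<dots> = C * nx^3" by (simp add: C_def algebra_simps)
    finally show "norm (Ln (\<rho> x / \<rho> 0) - (deriv \<rho> 0 / \<rho> 0) * x
        - (deriv (deriv \<rho>) 0 / (2 * \<rho> 0) - (deriv \<rho> 0 / \<rho> 0)^2/2) * x^2) \<le> C * norm x ^ 3"
      by (simp add: a_def p_def nx_def)
    show "norm (\<rho> x / \<rho> 0 - 1) \<le> 1/2" using wh by (simp add: w_def)
  qed
qed

lemma inv_sqrt_lim: "(\<lambda>n. inverse (sqrt (real n))) \<longlonglongrightarrow> 0"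
  by (rule tendsto_inverse_0_at_top[OF filterlim_compose[OF sqrt_at_top filterlim_real_sequentially]])

lemma const_inv_sqrt_lim: "(\<lambda>n. K * inverse (sqrt (real n))) \<longlonglongrightarrow> 0"
  using tendsto_mult_right_zero[OF inv_sqrt_lim, of K] by simp

lemma null_by_inv_sqrt:
  fixes f :: "nat \<Rightarrow> 'a::real_normed_vector"
  assumes "eventually (\<lambda>n. norm (f n) \<le> K * inverse (sqrt (real n))) sequentially"
  shows "f \<longlonglongrightarrow> 0"
  by (rule Lim_null_comparison[OF assms const_inv_sqrt_lim])

theorem mainTheorem5:
  fixes a :: "nat \<Rightarrow> nat \<Rightarrow> complex"
    and c \<rho> :: "complex \<Rightarrow> complex"
    and K :: "complex set"
    and k :: "nat \<Rightarrow> nat"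
  assumes c_an: "c analytic_on {0}" and rho_an: "\<rho> analytic_on {0}"
    and c0: "c 0 \<noteq> 0"
    and rho0_real: "\<rho> 0 \<in> \<real>" and rho0_pos: "Re (\<rho> 0) > 0"
    and rho'0: "deriv \<rho> 0 \<noteq> 0"
    and K: "compact K" "0 \<in> interior K"
    and conv: "\<And>n x. x \<in> K \<Longrightarrow> summable (\<lambda>j. a n j * x ^ j)"
    and est: "\<exists>C N. \<forall>n\<ge>N. \<forall>x\<in>K.
       norm (zcoeff_fun a n x - c x * of_real (real n powr (-5/2)) * \<rho> x ^ n)
         \<le> C / real n * norm (c x * of_real (real n powr (-5/2)) * \<rho> x ^ n)"
    and k: "(\<lambda>n. real (k n)) \<in> \<Theta>(\<lambda>n. sqrt (real n))"
  shows "(\<lambda>n. (fact (k n) :: complex) * a n (k n)) \<sim>[sequentially]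
     (\<lambda>n. c 0 * of_real (real n powr (real (k n) - 5/2)) * \<rho> 0 ^ n
        * (deriv \<rho> 0 / \<rho> 0) ^ k n
        * exp (of_real (real (k n) ^ 2 / (2 * real n))
               * (deriv (deriv \<rho>) 0 * \<rho> 0 / (deriv \<rho> 0) ^ 2 - 1)))"
proof -
  define \<rho>0 where "\<rho>0 = \<rho> 0"
  have r0: "\<rho>0 \<noteq> 0" using rho0_pos by (auto simp: \<rho>0_def)
  define a0 where "a0 = deriv \<rho> 0 / \<rho>0"
  define b0 where "b0 = deriv (deriv \<rho>) 0 / (2 * \<rho>0) - a0^2/2"
  have a0nz: "a0 \<noteq> 0" using rho'0 r0 by (simp add: a0_def)
  define A where "A = norm a0"
  have Ap: "A > 0" using a0nz by (simp add: A_def)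
  obtain R1 where R1: "R1 > 0" "c holomorphic_on ball 0 R1" using c_an by (auto simp: analytic_on_def)
  obtain R2 where R2: "R2 > 0" "\<rho> holomorphic_on ball 0 R2" using rho_an by (auto simp: analytic_on_def)
  define R where "R = min R1 R2"
  have R: "R > 0" "c holomorphic_on ball 0 R" "\<rho> holomorphic_on ball 0 R"
    using R1 R2 by (auto simp: R_def intro: holomorphic_on_subset)
  obtain C1 \<delta>1 where \<delta>1: "\<delta>1 > 0" and C1: "\<And>x. norm x < \<delta>1 \<Longrightarrow> norm (\<rho> x / \<rho>0 - 1) \<le> 1/2 \<and>
      norm (Ln (\<rho> x / \<rho>0) - a0 * x - b0 * x^2) \<le> C1 * norm x ^ 3"
    using log_expansion[OF R(3) R(1) r0[unfolded \<rho>0_def]] unfolding a0_def b0_def \<rho>0_def by blast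
  obtain \<delta>K where \<delta>K: "\<delta>K > 0" "ball 0 \<delta>K \<subseteq> K" using K(2) by (auto simp: mem_interior)
  define \<Delta> where "\<Delta> = min (min R \<delta>1) (min (\<delta>K/2) 1) / 2"
  have \<Delta>: "\<Delta> > 0" "\<Delta> < R" "\<Delta> < \<delta>1" "\<Delta> < \<delta>K/2" "\<Delta> \<le> 1/2"
    using R \<delta>1 \<delta>K by (auto simp: \<Delta>_def)
  have cb_sub: "cball 0 \<Delta> \<subseteq> ball 0 R" using \<Delta> by auto
  have contc: "continuous_on (cball 0 \<Delta>) c"
    by (rule holomorphic_on_imp_continuous_on[OF holomorphic_on_subset[OF R(2) cb_sub]])
  have "compact (c ` cball 0 \<Delta>)" by (intro compact_continuous_image contc) auto
  then obtain Mc where Mc': "\<And>y. y \<in> c ` cball 0 \<Delta> \<Longrightarrow> norm y \<le> Mc"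
    using compact_imp_bounded bounded_iff by metis
  have Mc: "norm (c x) \<le> Mc" if "norm x \<le> \<Delta>" for x using Mc'[of "c x"] that by auto
  have Mc00: "norm (c 0) \<le> Mc" using Mc[of 0] \<Delta> by simp
  have Mc0: "Mc \<ge> 0" using Mc00 norm_ge_zero[of "c 0"] by linarith
  define Hh where "Hh = norm b0 + \<bar>C1\<bar>"
  have inK: "x \<in> K" if "norm x \<le> \<Delta>" for x using that \<Delta> \<delta>K by auto
  have phi: "norm (\<rho> x / \<rho>0 - 1) \<le> 1/2" if "norm x \<le> \<Delta>" for x using C1[of x] that \<Delta> by auto
  have phinz: "\<rho> x / \<rho>0 \<noteq> 0" if "norm x \<le> \<Delta>" for x using phi[OF that] by auto
  have hb: "norm (Ln (\<rho> x / \<rho>0) - a0 * x) \<le> Hh * norm x ^ 2" if x: "norm x \<le> \<Delta>" for x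
  proof -
    have x1: "norm x \<le> 1" using x \<Delta> by simp
    have "norm (Ln (\<rho> x / \<rho>0) - a0 * x) \<le> norm (Ln (\<rho> x / \<rho>0) - a0 * x - b0 * x^2) + norm (b0 * x^2)"
      using norm_triangle_ineq[of "Ln (\<rho> x / \<rho>0) - a0 * x - b0 * x^2" "b0 * x^2"] by simp
    also have "\<dots> \<le> \<bar>C1\<bar> * norm x ^ 3 + norm b0 * norm x ^ 2"
    proof -
      have "norm (Ln (\<rho> x / \<rho>0) - a0 * x - b0 * x^2) \<le> C1 * norm x ^ 3" using C1[of x] x \<Delta> by auto
      also have "\<dots> \<le> \<bar>C1\<bar> * norm x ^ 3" by (intro mult_right_mono) auto
      finally show ?thesis by (simp add: norm_mult norm_power)
    qed
    also have "\<bar>C1\<bar> * norm x ^ 3 \<le> \<bar>C1\<bar> * norm x ^ 2"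
      by (intro mult_left_mono power_decreasing) (use x1 in auto)
    finally show ?thesis by (simp add: Hh_def algebra_simps)
  qed
  have expform: "(\<rho> x / \<rho>0)^n * exp (- (of_real (real n) * a0 * x)) = exp (of_real (real n) * (Ln (\<rho> x / \<rho>0) - a0 * x))"
    if "norm x \<le> \<Delta>" for x n
  proof -
    have "(\<rho> x / \<rho>0)^n = exp (of_nat n * Ln (\<rho> x / \<rho>0))"
      using phinz[OF that] by (simp add: exp_of_nat_mult)
    thus ?thesis by (simp add: exp_add[symmetric] algebra_simps)
  qed
  have normexp: "norm (exp z) \<le> exp (norm z)" for z :: complex
    using complex_Re_le_cmod[of z] by simp
  obtain C N where est': "\<And>n x. n \<ge> N \<Longrightarrow> x \<in> K \<Longrightarrow>
       norm (zcoeff_fun a n x - c x * of_real (real n powr (-5/2)) * \<rho> x ^ n)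
         \<le> C / real n * norm (c x * of_real (real n powr (-5/2)) * \<rho> x ^ n)"
    using est by blast
  obtain c1 where c1: "c1 > 0" "eventually (\<lambda>n. c1 * sqrt (real n) \<le> real (k n)) sequentially"
  proof -
    from bigthetaD2[OF k] obtain c' where "c' > 0"
      "eventually (\<lambda>n. norm (real (k n)) \<ge> c' * norm (sqrt (real n))) sequentially"
      by (elim landau_omega.bigE)
    thus ?thesis using that by (auto elim!: eventually_mono)
  qed
  obtain c2 where c2: "c2 > 0" "eventually (\<lambda>n. real (k n) \<le> c2 * sqrt (real n)) sequentially"
  proof -
    from bigthetaD1[OF k] obtain c' where "c' > 0"
      "eventually (\<lambda>n. norm (real (k n)) \<le> c' * norm (sqrt (real n))) sequentially"
      by (elim landau_o.bigE)
    thus ?thesis using that by (auto elim!: eventually_mono)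
  qed
  define u where "u n = complex_of_real (real n) * a0" for n
  define s where "s n = of_nat (k n) / u n" for n
  define rr where "rr n = real (k n) / (real n * A)" for n
  define \<beta> where "\<beta> n = complex_of_real (real n) * b0 * (s n)^2" for n
  define dd where "dd n = complex_of_real (real n) * (Ln (\<rho> (s n) / \<rho>0) - a0 * s n) - \<beta> n" for n
  define B\<beta> where "B\<beta> = norm b0 * c2^2 / A^2"
  define M2 where "M2 = exp (Hh * c2^2 / A^2)"
  define M where "M = Mc * exp (4 * Hh * c2^2 / A^2)"
  define T where "T = (\<Sum>j. real j ^ 2 / 2^j)"
  define m0 where "m0 = norm (c 0) * exp (- B\<beta>)"
  define Z where "Z n = (M * T * (1 / real (k n)) + norm (c (s n) - c 0) * M2
      + norm (c 0) * exp B\<beta> * norm (exp (dd n) - 1) + \<bar>C\<bar> * Mc * M2 * exp 1 * (real (k n) / real n)) / m0" for n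
  define Main where "Main n = c 0 * of_real (real n powr (real (k n) - 5/2)) * \<rho> 0 ^ n
        * (deriv \<rho> 0 / \<rho> 0) ^ k n
        * exp (of_real (real (k n) ^ 2 / (2 * real n))
               * (deriv (deriv \<rho>) 0 * \<rho> 0 / (deriv \<rho> 0) ^ 2 - 1))" for n
  define Q where "Q n = (fact (k n) :: complex) * a n (k n) / Main n" for n
  have m0p: "m0 > 0" using c0 by (simp add: m0_def)
  have ev_r: "eventually (\<lambda>n. 2 * (c2 / A) * inverse (sqrt (real n)) < \<Delta>) sequentially"
    using order_tendstoD(2)[OF const_inv_sqrt_lim[of "2 * (c2 / A)"] \<Delta>(1)] .
  have ev_c1: "eventually (\<lambda>n. c1 * sqrt (real n) > 0) sequentially"
    using eventually_ge_at_top[of "1::nat"] by eventually_elim (use c1 in auto)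
  have EV: "eventually (\<lambda>n. n \<ge> N \<and> n \<ge> 1 \<and> k n \<ge> 1 \<and> c1 * sqrt (real n) \<le> real (k n)
      \<and> real (k n) \<le> c2 * sqrt (real n) \<and> 2 * (c2 / A) * inverse (sqrt (real n)) < \<Delta>) sequentially"
    using eventually_ge_at_top[of N] eventually_ge_at_top[of "1::nat"] c1(2) c2(2) ev_r ev_c1
    by eventually_elim auto
  have rr_bound: "rr n \<le> (c2 / A) * inverse (sqrt (real n))"
    if "n \<ge> 1" "real (k n) \<le> c2 * sqrt (real n)" for n
  proof -
    have sq: "sqrt (real n) * sqrt (real n) = real n" by simp
    have sp: "sqrt (real n) > 0" using that by simp
    have "rr n \<le> c2 * sqrt (real n) / (real n * A)"
      unfolding rr_def using that Ap by (intro divide_right_mono) auto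
    also have "\<dots> = (c2 / A) * inverse (sqrt (real n))"
      using sp Ap by (subst sq[symmetric]) (simp add: field_simps)
    finally show ?thesis .
  qed
  have norm_s: "norm (s n) = rr n" if "n \<ge> 1" for n
    using that Ap by (simp add: s_def u_def rr_def norm_divide norm_mult A_def)
  have us: "u n * s n = of_nat (k n)" if "n \<ge> 1" for n
    using that a0nz by (simp add: s_def u_def)
  have nrr2: "real n * rr n ^ 2 \<le> c2^2 / A^2"
    if "n \<ge> 1" "real (k n) \<le> c2 * sqrt (real n)" for n
  proof -
    have k0: "0 \<le> real (k n)" by simp
    have "real (k n) ^ 2 \<le> (c2 * sqrt (real n))^2" using that k0 by (intro power_mono) auto
    also have "\<dots> = c2^2 * real n" by (simp add: power_mult_distrib)
    finally have kk: "real (k n) ^ 2 \<le> c2^2 * real n" .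
    have "real n * rr n ^ 2 = real (k n) ^ 2 / (real n * A^2)"
      using that Ap by (simp add: rr_def power2_eq_square field_simps)
    also have "\<dots> \<le> c2^2 * real n / (real n * A^2)"
      using kk that Ap by (intro divide_right_mono) auto
    also have "\<dots> = c2^2 / A^2" using that by simp
    finally show ?thesis .
  qed
  have ev: "eventually (\<lambda>n. norm (Q n - 1) \<le> Z n) sequentially"
    using EV
  proof eventually_elim
    case (elim n)
    define kk where "kk = k n"
    define nn where "nn = real n"
    have n1: "n \<ge> 1" and nN: "n \<ge> N" and kk1: "kk \<ge> 1" and kc2: "real kk \<le> c2 * sqrt nn"
      using elim by (auto simp: kk_def nn_def)
    have nnp: "nn > 0" using n1 by (simp add: nn_def)
    define r where "r = rr n"
    have rp: "r > 0" using kk1 nnp Ap by (simp add: r_def rr_def kk_def nn_def)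
    have r2: "2 * r < \<Delta>"
    proof -
      have "r \<le> (c2 / A) * inverse (sqrt (real n))" unfolding r_def
        by (rule rr_bound) (use elim in auto)
      thus ?thesis using elim by linarith
    qed
    have ns: "norm (s n) = r" using norm_s[OF n1] by (simp add: r_def)
    have usn: "u n * s n = of_nat kk" using us[OF n1] by (simp add: kk_def)
    have nu: "norm (u n) = nn * A" by (simp add: u_def A_def norm_mult nn_def)
    have u0: "u n \<noteq> 0" using nnp a0nz by (simp add: u_def nn_def)
    have nr2: "nn * r^2 \<le> c2^2/A^2" unfolding nn_def r_def by (rule nrr2) (use elim in auto)
    have unr: "nn * A * r = real kk" using nnp Ap by (simp add: r_def rr_def kk_def nn_def)
    have Hh0: "Hh \<ge> 0" by (simp add: Hh_def)
    define F where "F = Abs_fps (a n)"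
    have evalF: "eval_fps F = zcoeff_fun a n" by (simp add: fun_eq_iff eval_fps_def zcoeff_fun_def F_def)
    have radF: "fps_conv_radius F \<ge> ereal (\<delta>K/2)"
    proof -
      have z: "complex_of_real (\<delta>K/2) \<in> K" using \<delta>K by (intro subsetD[OF \<delta>K(2)]) auto
      have "ereal (norm (complex_of_real (\<delta>K/2))) \<le> conv_radius (fps_nth F)"
        by (rule conv_radius_geI) (use conv[OF z, of n] in \<open>simp add: F_def\<close>)
      thus ?thesis using \<delta>K by (simp add: fps_conv_radius_def)
    qed
    define S where "S = ball (0::complex) \<Delta>"
    have openS: "open S" and S0: "0 \<in> S" using \<Delta> by (auto simp: S_def)
    have Ssub: "S \<subseteq> eball 0 (fps_conv_radius F)"
    proof
      fix x assume "x \<in> S"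
      hence "norm x < \<delta>K/2" using \<Delta> by (auto simp: S_def)
      hence "ereal (norm x) < ereal (\<delta>K/2)" by simp
      hence "ereal (norm x) < fps_conv_radius F" using radF by (rule less_le_trans)
      thus "x \<in> eball 0 (fps_conv_radius F)" by simp
    qed
    have holF: "zcoeff_fun a n holomorphic_on S" using holomorphic_on_eval_fps[OF Ssub] evalF by simp
    have coef: "fact kk * a n kk = (deriv ^^ kk) (zcoeff_fun a n) 0"
    proof -
      have "0 < ereal (\<delta>K/2)" using \<delta>K by simp
      hence "fps_conv_radius F > 0" using radF by (rule less_le_trans)
      from fps_nth_conv_deriv[OF this, of kk]
      have "a n kk = (deriv ^^ kk) (eval_fps F) 0 / fact kk" by (simp add: F_def)
      thus ?thesis by (simp add: evalF)
    qed
    define ncr where "ncr = nn powr (-5/2)"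
    have ncr0: "ncr > 0" using nnp by (simp add: ncr_def)
    define nc where "nc = complex_of_real ncr"
    define P where "P x = c x * \<rho> x ^ n" for x
    define E where "E x = zcoeff_fun a n x - c x * nc * \<rho> x ^ n" for x
    define G where "G x = c x * (\<rho> x / \<rho>0) ^ n * exp (- (u n * x))" for x
    have SR: "S \<subseteq> ball 0 R" using \<Delta> by (auto simp: S_def)
    have holc: "c holomorphic_on S" using R(2) SR by (rule holomorphic_on_subset)
    have hol\<rho>: "\<rho> holomorphic_on S" using R(3) SR by (rule holomorphic_on_subset)
    have holP: "P holomorphic_on S" unfolding P_def by (intro holomorphic_intros holc hol\<rho>)
    have holE: "E holomorphic_on S" unfolding E_def by (intro holomorphic_intros holF holc hol\<rho>)
    have holG: "G holomorphic_on S" unfolding G_def using r0 by (intro holomorphic_intros holc hol\<rho>) auto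
    have holGe: "(\<lambda>x. G x * exp (u n * x)) holomorphic_on S" by (intro holomorphic_intros holG)
    have Pform: "P = (\<lambda>x. \<rho>0^n * (G x * exp (u n * x)))"
    proof
      fix x
      have "exp (- (u n * x)) * exp (u n * x) = 1" by (simp add: exp_minus)
      hence "G x * exp (u n * x) = c x * (\<rho> x / \<rho>0) ^ n" unfolding G_def by (simp add: mult.assoc)
      thus "P x = \<rho>0^n * (G x * exp (u n * x))" using r0 by (simp add: P_def power_divide)
    qed
    have Fform: "zcoeff_fun a n = (\<lambda>x. nc * P x + E x)" by (simp add: fun_eq_iff P_def E_def algebra_simps)
    have d1: "(deriv ^^ kk) (zcoeff_fun a n) 0 = nc * (deriv ^^ kk) P 0 + (deriv ^^ kk) E 0"
    proof -
      have "(deriv ^^ kk) (zcoeff_fun a n) 0 = (deriv ^^ kk) (\<lambda>x. nc * P x + E x) 0" by (simp only: Fform)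
      also have "\<dots> = (deriv ^^ kk) (\<lambda>x. nc * P x) 0 + (deriv ^^ kk) E 0"
        by (rule higher_deriv_add[OF _ holE openS S0]) (intro holomorphic_intros holP)
      also have "(deriv ^^ kk) (\<lambda>x. nc * P x) 0 = nc * (deriv ^^ kk) P 0"
        by (rule higher_deriv_cmult[OF holP S0 openS])
      finally show ?thesis .
    qed
    define g where "g j = (deriv ^^ j) G 0" for j
    define D where "D = (\<Sum>i=0..kk. of_nat (kk choose i) * g i * u n ^ (kk - i)) / u n ^ kk"
    have d2: "(deriv ^^ kk) P 0 = \<rho>0^n * u n ^ kk * D"
    proof -
      have "(deriv ^^ kk) P 0 = (deriv ^^ kk) (\<lambda>x. \<rho>0^n * (G x * exp (u n * x))) 0" by (simp only: Pform)
      also have "\<dots> = \<rho>0^n * (deriv ^^ kk) (\<lambda>x. G x * exp (u n * x)) 0"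
        by (rule higher_deriv_cmult[OF holGe S0 openS])
      also have "(deriv ^^ kk) (\<lambda>x. G x * exp (u n * x)) 0 =
          (\<Sum>i=0..kk. of_nat (kk choose i) * (deriv ^^ i) G 0 * (deriv ^^ (kk - i)) (\<lambda>x. exp (u n * x)) 0)"
        by (rule higher_deriv_mult[OF holG _ openS S0]) (intro holomorphic_intros)
      also have "\<dots> = (\<Sum>i=0..kk. of_nat (kk choose i) * g i * u n ^ (kk - i))"
        by (simp add: higher_deriv_exp_linear g_def)
      finally show ?thesis using u0 by (simp add: D_def)
    qed
    have Gexp: "G x = c x * exp (of_real nn * (Ln (\<rho> x / \<rho>0) - a0 * x))" if "norm x \<le> \<Delta>" for x
      using expform[OF that, of n] by (simp add: G_def u_def nn_def mult.assoc)
    have Gb: "norm (G x) \<le> M" if x: "norm x = 2 * r" for x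
    proof -
      have xD: "norm x \<le> \<Delta>" using x r2 by simp
      have "norm (of_real nn * (Ln (\<rho> x / \<rho>0) - a0 * x)) \<le> nn * (Hh * norm x ^ 2)"
        using hb[OF xD] nnp by (simp add: norm_mult)
      also have "\<dots> = 4 * Hh * (nn * r^2)" using x by (simp add: power2_eq_square)
      also have "\<dots> \<le> 4 * Hh * (c2^2/A^2)" using nr2 Hh0 by (intro mult_left_mono) auto
      finally have "norm (exp (of_real nn * (Ln (\<rho> x / \<rho>0) - a0 * x))) \<le> exp (4 * Hh * c2^2 / A^2)"
        using normexp order_trans by fastforce
      hence "norm (c x) * norm (exp (of_real nn * (Ln (\<rho> x / \<rho>0) - a0 * x))) \<le> Mc * exp (4 * Hh * c2^2 / A^2)"
        using Mc[OF xD] Mc0 by (intro mult_mono) auto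
      thus ?thesis using Gexp[OF xD] by (simp add: M_def norm_mult)
    qed
    have gb: "norm (g j) \<le> fact j * M / (2*r)^j" for j
    proof -
      have sub: "cball 0 (2*r) \<subseteq> S" using r2 by (auto simp: S_def)
      show ?thesis unfolding g_def
        by (rule Cauchy_inequality[OF holomorphic_on_subset[OF holG] holomorphic_on_imp_continuous_on[OF holomorphic_on_subset[OF holG sub]]])
           (use sub rp Gb in \<open>auto simp: dist_norm norm_minus_commute\<close>)
    qed
    have sS: "s n \<in> S" using ns r2 rp by (auto simp: S_def)
    have gs: "(\<lambda>j. g j / fact j * s n ^ j) sums G (s n)"
      using holomorphic_power_series[OF holG[unfolded S_def] sS[unfolded S_def]] by (simp add: g_def)
    have DG: "norm (D - G (s n)) \<le> M / real kk * T"
      unfolding D_def T_def by (rule coeff_compare[OF kk1 rp ns usn gb gs])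
    define V where "V = c 0 * exp (\<beta> n)"
    have sD: "norm (s n) \<le> \<Delta>" using ns r2 rp by simp
    have nbeta: "norm (\<beta> n) \<le> B\<beta>"
    proof -
      have "norm (\<beta> n) = norm b0 * (nn * r^2)" using nnp by (simp add: \<beta>_def norm_mult norm_power ns nn_def)
      also have "\<dots> \<le> norm b0 * (c2^2/A^2)" using nr2 by (intro mult_left_mono) auto
      finally show ?thesis by (simp add: B\<beta>_def)
    qed
    have nexp_sum: "norm (exp (dd n + \<beta> n)) \<le> M2"
    proof -
      have "dd n + \<beta> n = of_real nn * (Ln (\<rho> (s n) / \<rho>0) - a0 * s n)" by (simp add: dd_def nn_def)
      hence "norm (dd n + \<beta> n) \<le> nn * (Hh * r^2)" using hb[OF sD] nnp by (simp add: norm_mult ns)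
      also have "\<dots> = Hh * (nn * r^2)" by simp
      also have "\<dots> \<le> Hh * (c2^2/A^2)" using nr2 Hh0 by (intro mult_left_mono) auto
      finally show ?thesis using normexp[of "dd n + \<beta> n"] by (simp add: M2_def order_trans)
    qed
    have Gs: "G (s n) = c (s n) * exp (dd n + \<beta> n)"
      using Gexp[OF sD] by (simp add: dd_def nn_def)
    have GV: "norm (G (s n) - V) \<le> norm (c (s n) - c 0) * M2 + norm (c 0) * exp B\<beta> * norm (exp (dd n) - 1)"
    proof -
      have "G (s n) - V = (c (s n) - c 0) * exp (dd n + \<beta> n) + c 0 * exp (\<beta> n) * (exp (dd n) - 1)"
        unfolding Gs V_def by (simp add: exp_add algebra_simps)
      hence "norm (G (s n) - V) \<le> norm (c (s n) - c 0) * norm (exp (dd n + \<beta> n)) + norm (c 0) * norm (exp (\<beta> n)) * norm (exp (dd n) - 1)"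
        using norm_triangle_ineq[of "(c (s n) - c 0) * exp (dd n + \<beta> n)" "c 0 * exp (\<beta> n) * (exp (dd n) - 1)"]
        by (simp add: norm_mult)
      also have "\<dots> \<le> norm (c (s n) - c 0) * M2 + norm (c 0) * exp B\<beta> * norm (exp (dd n) - 1)"
      proof (intro add_mono mult_left_mono mult_right_mono)
        show "norm (exp (\<beta> n)) \<le> exp B\<beta>" using normexp[of "\<beta> n"] nbeta by (meson exp_le_cancel_iff order_trans)
      qed (use nexp_sum in auto)
      finally show ?thesis .
    qed
    have Vlow: "norm V \<ge> m0"
    proof -
      have "- B\<beta> \<le> Re (\<beta> n)" using abs_Re_le_cmod[of "\<beta> n"] nbeta by linarith
      hence "exp (- B\<beta>) \<le> exp (Re (\<beta> n))" by simp
      thus ?thesis unfolding V_def m0_def by (simp add: norm_mult mult_left_mono)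
    qed
    have V0: "V \<noteq> 0" using c0 by (simp add: V_def)
    define Eerr where "Eerr = (deriv ^^ kk) E 0"
    define BE where "BE = \<bar>C\<bar> / nn * Mc * ncr * norm \<rho>0 ^ n * exp (real kk) * M2"
    have Eb: "norm (E x) \<le> BE" if x: "norm x = r" for x
    proof -
      have xD: "norm x \<le> \<Delta>" using x r2 rp by simp
      have "norm (E x) \<le> C / nn * norm (c x * nc * \<rho> x ^ n)"
        using est'[OF nN inK[OF xD]] by (simp add: E_def nc_def ncr_def nn_def)
      also have "\<dots> \<le> \<bar>C\<bar> / nn * norm (c x * nc * \<rho> x ^ n)"
        using nnp by (intro mult_right_mono divide_right_mono) auto
      also have "norm (c x * nc * \<rho> x ^ n) \<le> Mc * ncr * (norm \<rho>0 ^ n * (exp (real kk) * M2))"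
      proof -
        have "\<rho> x ^ n = \<rho>0 ^ n * (exp (u n * x) * exp (of_real nn * (Ln (\<rho> x / \<rho>0) - a0 * x)))"
        proof -
          have "\<rho> x ^ n = \<rho>0 ^ n * (\<rho> x / \<rho>0) ^ n" using r0 by (simp add: power_divide)
          also have "(\<rho> x / \<rho>0) ^ n = exp (u n * x) * ((\<rho> x / \<rho>0)^n * exp (- (u n * x)))"
            by (simp add: exp_minus)
          also have "(\<rho> x / \<rho>0)^n * exp (- (u n * x)) = exp (of_real nn * (Ln (\<rho> x / \<rho>0) - a0 * x))"
            using expform[OF xD, of n] by (simp add: u_def nn_def mult.assoc)
          finally show ?thesis .
        qed
        hence eq: "norm (\<rho> x ^ n) = norm \<rho>0 ^ n * (norm (exp (u n * x)) * norm (exp (of_real nn * (Ln (\<rho> x / \<rho>0) - a0 * x))))"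
          by (simp add: norm_mult norm_power)
        have e1: "norm (exp (u n * x)) \<le> exp (real kk)"
        proof -
          have "norm (u n * x) = real kk" using nu x unr by (simp add: norm_mult)
          thus ?thesis using normexp[of "u n * x"] by simp
        qed
        have e2: "norm (exp (of_real nn * (Ln (\<rho> x / \<rho>0) - a0 * x))) \<le> M2"
        proof -
          have "norm (of_real nn * (Ln (\<rho> x / \<rho>0) - a0 * x)) \<le> nn * (Hh * r^2)"
            using hb[OF xD] nnp x by (simp add: norm_mult)
          also have "\<dots> = Hh * (nn * r^2)" by simp
          also have "\<dots> \<le> Hh * (c2^2/A^2)" using nr2 Hh0 by (intro mult_left_mono) auto
          finally show ?thesis using normexp[of "of_real nn * (Ln (\<rho> x / \<rho>0) - a0 * x)"]
            by (simp add: M2_def order_trans)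
        qed
        have "norm (\<rho> x ^ n) \<le> norm \<rho>0 ^ n * (exp (real kk) * M2)"
          unfolding eq by (intro mult_left_mono mult_mono e1 e2) auto
        moreover have "norm (c x * nc * \<rho> x ^ n) = norm (c x) * ncr * norm (\<rho> x ^ n)"
          using ncr0 by (simp add: norm_mult nc_def)
        ultimately show ?thesis using Mc[OF xD] ncr0 Mc0 by (auto intro!: mult_mono)
      qed
      hence "\<bar>C\<bar> / nn * norm (c x * nc * \<rho> x ^ n) \<le> \<bar>C\<bar> / nn * (Mc * ncr * (norm \<rho>0 ^ n * (exp (real kk) * M2)))"
        using nnp by (intro mult_left_mono) auto
      finally show ?thesis by (simp add: BE_def mult_ac)
    qed
    have Eerr_b: "norm Eerr \<le> fact kk * BE / r^kk"
    proof -
      have sub: "cball 0 r \<subseteq> S" using r2 rp by (auto simp: S_def)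
      show ?thesis unfolding Eerr_def
        by (rule Cauchy_inequality[OF holomorphic_on_subset[OF holE] holomorphic_on_imp_continuous_on[OF holomorphic_on_subset[OF holE sub]]])
           (use sub rp Eb in \<open>auto simp: dist_norm norm_minus_commute\<close>)
    qed
    define W where "W = nc * \<rho>0 ^ n * u n ^ kk"
    have nW: "norm W = ncr * norm \<rho>0 ^ n * (nn * A) ^ kk"
      using ncr0 by (simp add: W_def nc_def norm_mult norm_power nu)
    have W0: "W \<noteq> 0" using ncr0 r0 u0 by (simp add: W_def nc_def)
    have EW: "norm Eerr / norm W \<le> \<bar>C\<bar> * Mc * M2 * exp 1 * (real kk / nn)"
    proof -
      have Wp: "norm W > 0" using W0 by simp
      have "norm Eerr / norm W \<le> (fact kk * BE / r^kk) / norm W"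
        using Eerr_b Wp by (intro divide_right_mono) auto
      also have "\<dots> = \<bar>C\<bar> * Mc * M2 / nn * (fact kk * exp (real kk) / (nn * A * r) ^ kk)"
        unfolding nW BE_def using ncr0 rp nnp Ap r0
        by (simp add: field_simps power_mult_distrib)
      also have "\<dots> = \<bar>C\<bar> * Mc * M2 / nn * (fact kk * exp (real kk) / real kk ^ kk)"
        by (simp add: unr)
      also have "\<dots> \<le> \<bar>C\<bar> * Mc * M2 / nn * (exp 1 * real kk)"
        using fact_exp_bound[OF kk1] Mc0 nnp by (intro mult_left_mono) (auto simp: M2_def)
      also have "\<dots> = \<bar>C\<bar> * Mc * M2 * exp 1 * (real kk / nn)" by simp
      finally show ?thesis .
    qed
    have Main_eq: "Main n = W * V"
    proof -
      have dr: "deriv \<rho> 0 = a0 * \<rho>0" using r0 by (simp add: a0_def)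
      have pw: "nn powr (real kk - 5/2) = nn ^ kk * ncr"
        using nnp by (simp add: ncr_def powr_add[symmetric] powr_realpow[symmetric])
      have ex: "complex_of_real (real kk ^ 2 / (2 * nn)) * (deriv (deriv \<rho>) 0 * \<rho>0 / (deriv \<rho> 0) ^ 2 - 1) = \<beta> n"
        using r0 a0nz nnp unfolding \<beta>_def s_def u_def b0_def dr
        by (simp add: field_simps power2_eq_square nn_def kk_def)
      have ad: "deriv \<rho> 0 / \<rho> 0 = a0" by (simp add: a0_def \<rho>0_def)
      have ex': "exp (complex_of_real (real (k n) ^ 2 / (2 * real n)) * (deriv (deriv \<rho>) 0 * \<rho> 0 / (deriv \<rho> 0) ^ 2 - 1)) = exp (\<beta> n)"
        using ex unfolding nn_def kk_def \<rho>0_def by simp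
      have pw': "complex_of_real (real n powr (real (k n) - 5/2)) = complex_of_real (real n) ^ k n * nc"
        using pw by (simp add: nn_def kk_def nc_def)
      have "Main n = c 0 * (complex_of_real (real n) ^ k n * nc) * \<rho> 0 ^ n * a0 ^ k n * exp (\<beta> n)"
        unfolding Main_def ad ex' pw' by (rule refl)
      thus ?thesis by (simp add: W_def V_def u_def power_mult_distrib \<rho>0_def kk_def mult_ac)
    qed
    have fk: "fact kk * a n kk = W * D + Eerr"
      using coef d1 d2 by (simp add: W_def Eerr_def mult_ac)
    have Qeq: "Q n - 1 = (D - V) / V + Eerr / W / V"
    proof -
      have "Q n = (W * D + Eerr) / (W * V)" by (simp add: Q_def Main_eq fk[unfolded kk_def])
      thus ?thesis using W0 V0 by (simp add: field_simps)
    qed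
    have X0: "0 \<le> M / real kk * T + (norm (c (s n) - c 0) * M2 + norm (c 0) * exp B\<beta> * norm (exp (dd n) - 1))
        + \<bar>C\<bar> * Mc * M2 * exp 1 * (real kk / nn)"
    proof -
      have "0 \<le> M" using Mc0 by (simp add: M_def)
      moreover have "0 \<le> T" unfolding T_def by (intro suminf_nonneg summable_sq_half) auto
      ultimately show ?thesis using Mc0 nnp by (intro add_nonneg_nonneg mult_nonneg_nonneg) (auto simp: M2_def)
    qed
    have "norm (Q n - 1) \<le> norm (D - V) / norm V + norm Eerr / norm W / norm V"
      unfolding Qeq using norm_triangle_ineq[of "(D - V) / V" "Eerr / W / V"] by (simp add: norm_divide norm_mult)
    also have "\<dots> = (norm (D - V) + norm Eerr / norm W) / norm V" by (simp add: add_divide_distrib)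
    also have "\<dots> \<le> (M / real kk * T + (norm (c (s n) - c 0) * M2 + norm (c 0) * exp B\<beta> * norm (exp (dd n) - 1))
        + \<bar>C\<bar> * Mc * M2 * exp 1 * (real kk / nn)) / norm V"
    proof (intro divide_right_mono add_mono)
      show "norm (D - V) \<le> M / real kk * T + (norm (c (s n) - c 0) * M2 + norm (c 0) * exp B\<beta> * norm (exp (dd n) - 1))"
        using norm_triangle_ineq[of "D - G (s n)" "G (s n) - V"] DG GV by simp
    qed (use EW in auto)
    also have "\<dots> \<le> (M / real kk * T + (norm (c (s n) - c 0) * M2 + norm (c 0) * exp B\<beta> * norm (exp (dd n) - 1))
        + \<bar>C\<bar> * Mc * M2 * exp 1 * (real kk / nn)) / m0"
    proof -
      have Vp: "norm V > 0" using Vlow m0p by linarith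
      have "0 < norm V * m0" using Vp m0p by simp
      thus ?thesis using X0 Vlow m0p by (intro divide_left_mono) auto
    qed
    also have "\<dots> = Z n" by (simp add: Z_def kk_def nn_def algebra_simps)
    finally show ?case .
  qed
  have lim1: "(\<lambda>n. 1 / real (k n)) \<longlonglongrightarrow> 0"
  proof (rule null_by_inv_sqrt[where K="1/c1"])
    show "eventually (\<lambda>n. norm (1 / real (k n)) \<le> 1 / c1 * inverse (sqrt (real n))) sequentially"
      using EV
    proof eventually_elim
      case (elim n)
      have p: "c1 * sqrt (real n) > 0" using elim c1 by simp
      have "inverse (real (k n)) \<le> inverse (c1 * sqrt (real n))"
        using elim p by (intro le_imp_inverse_le) auto
      thus ?case by (simp add: field_simps)
    qed
  qed
  have lim_s: "s \<longlonglongrightarrow> 0"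
  proof (rule null_by_inv_sqrt[where K="c2/A"])
    show "eventually (\<lambda>n. norm (s n) \<le> c2 / A * inverse (sqrt (real n))) sequentially"
      using EV by eventually_elim (use norm_s rr_bound in auto)
  qed
  have lim_c: "(\<lambda>n. c (s n) - c 0) \<longlonglongrightarrow> 0"
  proof -
    have "isCont c 0" by (rule analytic_at_imp_isCont[OF c_an])
    from isCont_tendsto_compose[OF this lim_s] show ?thesis by (rule LIM_zero)
  qed
  have lim_dd: "dd \<longlonglongrightarrow> 0"
  proof (rule null_by_inv_sqrt[where K="\<bar>C1\<bar> * (c2/A)^3"])
    show "eventually (\<lambda>n. norm (dd n) \<le> \<bar>C1\<bar> * (c2/A)^3 * inverse (sqrt (real n))) sequentially"
      using EV
    proof eventually_elim
      case (elim n)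
      have n1: "n \<ge> 1" using elim by simp
      have rpos: "rr n \<ge> 0" using Ap by (simp add: rr_def)
      have rb: "rr n \<le> (c2 / A) * inverse (sqrt (real n))" using rr_bound elim by auto
      have rD: "rr n < \<delta>1"
      proof -
        have "rr n \<le> 2 * (c2 / A) * inverse (sqrt (real n))" using rb rpos by linarith
        thus ?thesis using elim \<Delta> by linarith
      qed
      have "dd n = complex_of_real (real n) * (Ln (\<rho> (s n) / \<rho>0) - a0 * s n - b0 * s n ^ 2)"
        by (simp add: dd_def \<beta>_def algebra_simps)
      hence "norm (dd n) = real n * norm (Ln (\<rho> (s n) / \<rho>0) - a0 * s n - b0 * s n ^ 2)"
        by (simp add: norm_mult)
      also have "\<dots> \<le> real n * (\<bar>C1\<bar> * rr n ^ 3)"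
      proof -
        have "norm (Ln (\<rho> (s n) / \<rho>0) - a0 * s n - b0 * s n ^ 2) \<le> C1 * rr n ^ 3"
          using C1[of "s n"] norm_s[OF n1] rD by auto
        also have "\<dots> \<le> \<bar>C1\<bar> * rr n ^ 3" using rpos by (intro mult_right_mono) auto
        finally show ?thesis by (intro mult_left_mono) auto
      qed
      also have "\<dots> \<le> real n * (\<bar>C1\<bar> * ((c2 / A) * inverse (sqrt (real n))) ^ 3)"
        using rb rpos by (intro mult_left_mono power_mono) auto
      also have "\<dots> = \<bar>C1\<bar> * (c2/A)^3 * inverse (sqrt (real n))"
      proof -
        have sq: "sqrt (real n) * sqrt (real n) = real n" by simp
        have sp: "sqrt (real n) > 0" using n1 by simp
        show ?thesis using sp by (subst (1) sq[symmetric]) (simp add: field_simps power3_eq_cube)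
      qed
      finally show ?case .
    qed
  qed
  have lim_e: "(\<lambda>n. exp (dd n) - 1) \<longlonglongrightarrow> 0"
    using tendsto_exp[OF lim_dd] by (intro LIM_zero) simp
  have lim_kn: "(\<lambda>n. real (k n) / real n) \<longlonglongrightarrow> 0"
  proof (rule null_by_inv_sqrt[where K="c2"])
    show "eventually (\<lambda>n. norm (real (k n) / real n) \<le> c2 * inverse (sqrt (real n))) sequentially"
      using EV
    proof eventually_elim
      case (elim n)
      have sq: "sqrt (real n) * sqrt (real n) = real n" by simp
      have sp: "sqrt (real n) > 0" using elim by simp
      have "real (k n) / real n \<le> c2 * sqrt (real n) / real n"
        using elim by (intro divide_right_mono) auto
      also have "\<dots> = c2 * inverse (sqrt (real n))"
        using sp by (subst (2) sq[symmetric]) (simp add: field_simps)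
      finally show ?case by simp
    qed
  qed
  have limZ: "Z \<longlonglongrightarrow> 0"
  proof -
    have "(\<lambda>n. (M * T * (1 / real (k n)) + norm (c (s n) - c 0) * M2
      + norm (c 0) * exp B\<beta> * norm (exp (dd n) - 1) + \<bar>C\<bar> * Mc * M2 * exp 1 * (real (k n) / real n)) / m0)
       \<longlonglongrightarrow> (M * T * 0 + 0 * M2 + norm (c 0) * exp B\<beta> * 0 + \<bar>C\<bar> * Mc * M2 * exp 1 * 0) / m0"
      using m0p by (intro tendsto_intros lim1 lim_kn tendsto_norm_zero lim_c lim_e) auto
    thus ?thesis by (simp add: Z_def[abs_def])
  qed
  have "(\<lambda>n. Q n - 1) \<longlonglongrightarrow> 0" by (rule Lim_null_comparison[OF ev limZ])
  hence "Q \<longlonglongrightarrow> 1" by (rule LIM_zero_cancel)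
  hence "(\<lambda>n. (fact (k n) :: complex) * a n (k n) / Main n) \<longlonglongrightarrow> 1" by (simp add: Q_def[abs_def])
  thus ?thesis unfolding Main_def by (rule asymp_equivI')
qed

end
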